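(* Let $N\ge 2$ and let $(\nu_r^{(1:N)})_{r\ge1}$ be vectors of non-negative integers with $\sum_i \nu_r^{(i)} = N$, with $c_N$ and $\tau_N$ as defined below, and assume $\tau_N(u)<\infty$ for all $u\ge0$. Fix real $t > s > 0$ and $l \in \mathbb{N}$. Then (a) $\displaystyle\sum_{\substack{s_1,\dots,s_l = \tau_N(s)+1\\ \text{all distinct}}}^{\tau_N(t)} \prod_{j=1}^l c_N(s_j) \leq (t-s+1)^l \leq (t+1)^l$; (b) $\displaystyle\Bigg[(t-s)^l - \Bigg(c_N(\tau_N(s)) + \binom{l}{2}\sum_{r=\tau_N(s)+1}^{\tau_N(t)} c_N(r)^2\Bigg)(t+1)^l\Bigg]\mathbb{1}_{\{c_N(\tau_N(s)) \leq t-s\}} \leq \sum_{\substack{s_1,\dots,s_l = \tau_N(s)+1\\ \text{all distinct}}}^{\tau_N(t)} \prod_{j=1}^l c_N(s_j) \leq (t-s)^l + c_N(\tau_N(t))(t+1)^l.$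
   Context: $c_N(r) := \frac{1}{(N)_2}\sum_{i=1}^N (\nu_r^{(i)})_2$ with $(x)_k$ the falling factorial; $\tau_N(u) := \inf\{s\in\{0,1,2,\dots\} : \sum_{r=1}^s c_N(r) \ge u\}$. *)

theory Defs
  imports Main Complex_Main
begin

definition ffact2 :: "real \<Rightarrow> real" where
  "ffact2 x = x * (x - 1)"

text \<open>nu r i is the i-th component of the vector nu_r^(1:N).\<close>
definition cN :: "nat \<Rightarrow> (nat \<Rightarrow> nat \<Rightarrow> nat) \<Rightarrow> nat \<Rightarrow> real" where
  "cN N nu r = (\<Sum>i=1..N. ffact2 (real (nu r i))) / ffact2 (real N)"

definition tauN :: "nat \<Rightarrow> (nat \<Rightarrow> nat \<Rightarrow> nat) \<Rightarrow> real \<Rightarrow> nat" where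
  "tauN N nu u = Inf {s::nat. (\<Sum>r=1..s. cN N nu r) \<ge> u}"

text \<open>Sum over all tuples (s_1,...,s_l) of pairwise distinct indices in {a..b}
  of prod_j c(s_j); tuples are represented as distinct lists of length l.\<close>
definition distinct_tuple_sum :: "(nat \<Rightarrow> real) \<Rightarrow> nat \<Rightarrow> nat \<Rightarrow> nat \<Rightarrow> real" where
  "distinct_tuple_sum c l a b =
     (\<Sum>xs\<in>{xs. length xs = l \<and> distinct xs \<and> set xs \<subseteq> {a..b}}. \<Prod>j<l. c (xs ! j))"

end

theory Submission imports Defs begin

lemma sum_lists_prod:
  assumes "finite A"
  shows "(\<Sum>xs\<in>{xs. length xs = l \<and> set xs \<subseteq> A}. \<Prod>j<l. f j (xs!j)) = (\<Prod>j<l. \<Sum>a\<in>A. (f j a::real))"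
  using assms
proof (induction l arbitrary: f)
  case 0
  have "{xs. length xs = 0 \<and> set xs \<subseteq> A} = {[]}" by auto
  then show ?case by simp
next
  case (Suc l)
  let ?L = "{ys. length ys = l \<and> set ys \<subseteq> A}"
  have eq: "{xs. length xs = Suc l \<and> set xs \<subseteq> A} = (\<lambda>(x,ys). x#ys) ` (A \<times> ?L)"
    by (auto simp: length_Suc_conv image_iff)
  have inj: "inj_on (\<lambda>(x,ys). x#ys) X" for X :: "('b \<times> 'b list) set" by (auto simp: inj_on_def)
  have "(\<Sum>xs\<in>{xs. length xs = Suc l \<and> set xs \<subseteq> A}. \<Prod>j<Suc l. f j (xs!j))
      = (\<Sum>(x,ys)\<in>A \<times> ?L. \<Prod>j<Suc l. f j ((x#ys)!j))"
    unfolding eq by (subst sum.reindex[OF inj]) (simp add: case_prod_unfold)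
  also have "\<dots> = (\<Sum>(x,ys)\<in>A \<times> ?L. f 0 x * (\<Prod>j<l. f (Suc j) (ys!j)))"
    by (simp only: prod.lessThan_Suc_shift nth_Cons_0 nth_Cons_Suc)
  also have "\<dots> = (\<Sum>x\<in>A. f 0 x) * (\<Sum>ys\<in>?L. \<Prod>j<l. f (Suc j) (ys!j))"
    by (simp add: sum_product sum.cartesian_product)
  also have "\<dots> = (\<Sum>x\<in>A. f 0 x) * (\<Prod>j<l. \<Sum>a\<in>A. f (Suc j) a)"
    using Suc.IH[OF Suc.prems, of "\<lambda>j. f (Suc j)"] by simp
  also have "\<dots> = (\<Prod>j<Suc l. \<Sum>a\<in>A. f j a)" by (simp only: prod.lessThan_Suc_shift)
  finally show ?case .
qed

lemma pow_convex:
  fixes x c :: real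
  assumes "0 \<le> x" "0 \<le> c" "c \<le> 1"
  shows "(x+c)^l \<le> (1-c)*x^l + c*(x+1)^l"
proof (induction l)
  case 0 then show ?case by simp
next
  case (Suc l)
  have "(x+c)^Suc l = (x+c)*(x+c)^l" by simp
  also have "\<dots> \<le> (x+c)*((1-c)*x^l + c*(x+1)^l)"
    by (rule mult_left_mono[OF Suc.IH]) (use assms in simp)
  also have "\<dots> = (1-c)*x^Suc l + c*(x+1)^Suc l - c*(1-c)*((x+1)^l - x^l)"
    by (simp add: algebra_simps)
  also have "\<dots> \<le> (1-c)*x^Suc l + c*(x+1)^Suc l"
  proof -
    have "x^l \<le> (x+1)^l" by (rule power_mono) (use assms in auto)
    moreover have "0 \<le> c*(1-c)" using assms by simp
    ultimately have "0 \<le> c*(1-c)*((x+1)^l - x^l)" by simp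
    then show ?thesis by linarith
  qed
  finally show ?case .
qed

lemma prod_if_one:
  fixes T Q :: real
  assumes "k < l"
  shows "(\<Prod>j<l. if j = k then Q else T) = Q * T^(l-1)"
proof -
  have "(\<Prod>j<l. if j = k then Q else T) = (if k = k then Q else T) * (\<Prod>j\<in>{..<l}-{k}. if j = k then Q else T)"
    by (rule prod.remove) (use assms in auto)
  also have "(\<Prod>j\<in>{..<l}-{k}. if j = k then Q else T) = (\<Prod>j\<in>{..<l}-{k}. T)"
    by (rule prod.cong) auto
  also have "\<dots> = T^(l-1)" using assms by simp
  finally show ?thesis by simp
qed

lemma dist_step:
  fixes c :: "'a \<Rightarrow> real"
  assumes fin: "finite A"
  shows "(\<Sum>xs\<in>{xs. length xs = Suc l \<and> distinct xs \<and> set xs \<subseteq> A}. \<Prod>j<Suc l. c (xs!j))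
     = (\<Sum>ys\<in>{xs. length xs = l \<and> distinct xs \<and> set xs \<subseteq> A}. (\<Prod>j<l. c (ys!j)) * (sum c A - (\<Sum>k<l. c (ys!k))))"
proof -
  let ?D = "{xs. length xs = l \<and> distinct xs \<and> set xs \<subseteq> A}"
  have finD: "finite ?D"
    by (rule finite_subset[OF _ finite_lists_length_eq[OF fin, of l]]) auto
  have eq: "{xs. length xs = Suc l \<and> distinct xs \<and> set xs \<subseteq> A} = (\<lambda>(ys,x). x#ys) ` (SIGMA ys:?D. A - set ys)"
    by (auto simp: length_Suc_conv image_iff)
  have inj: "inj_on (\<lambda>(ys,x). x#ys) X" for X :: "('a list \<times> 'a) set" by (auto simp: inj_on_def)
  have "(\<Sum>xs\<in>{xs. length xs = Suc l \<and> distinct xs \<and> set xs \<subseteq> A}. \<Prod>j<Suc l. c (xs!j))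
      = (\<Sum>(ys,x)\<in>(SIGMA ys:?D. A - set ys). \<Prod>j<Suc l. c ((x#ys)!j))"
    unfolding eq by (subst sum.reindex[OF inj]) (simp add: case_prod_unfold)
  also have "\<dots> = (\<Sum>(ys,x)\<in>(SIGMA ys:?D. A - set ys). c x * (\<Prod>j<l. c (ys!j)))"
    by (simp only: prod.lessThan_Suc_shift nth_Cons_0 nth_Cons_Suc)
  also have "\<dots> = (\<Sum>ys\<in>?D. \<Sum>x\<in>A - set ys. c x * (\<Prod>j<l. c (ys!j)))"
    by (rule sum.Sigma[symmetric]) (use finD fin in auto)
  also have "\<dots> = (\<Sum>ys\<in>?D. (\<Prod>j<l. c (ys!j)) * (sum c A - (\<Sum>k<l. c (ys!k))))"
  proof (rule sum.cong)
    fix ys assume ys: "ys \<in> ?D"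
    have "(\<Sum>x\<in>A - set ys. c x * (\<Prod>j<l. c (ys!j))) = (\<Prod>j<l. c (ys!j)) * sum c (A - set ys)"
      by (simp add: sum_distrib_right mult.commute)
    also have "sum c (A - set ys) = sum c A - sum c (set ys)"
      using ys fin by (simp add: sum_diff)
    also have "sum c (set ys) = (\<Sum>k<l. c (ys!k))"
      using ys sum_list_distinct_conv_sum_set[of ys c] sum_list_sum_nth[of "map c ys"]
      by (simp add: atLeast0LessThan)
    finally show "(\<Sum>x\<in>A - set ys. c x * (\<Prod>j<l. c (ys!j))) = (\<Prod>j<l. c (ys!j)) * (sum c A - (\<Sum>k<l. c (ys!k)))" .
  qed simp
  finally show ?thesis .
qed

lemma dist_bound:
  fixes c :: "'a \<Rightarrow> real"
  assumes fin: "finite A" and nn: "\<And>a. a \<in> A \<Longrightarrow> 0 \<le> c a"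
    and TM: "sum c A \<le> M" and M1: "1 \<le> M"
  shows "(sum c A)^l - (\<Sum>xs\<in>{xs. length xs = l \<and> distinct xs \<and> set xs \<subseteq> A}. \<Prod>j<l. c (xs!j))
     \<le> real (l choose 2) * (\<Sum>a\<in>A. (c a)^2) * M^l"
proof (induction l)
  case 0
  have "{xs. length xs = 0 \<and> distinct xs \<and> set xs \<subseteq> A} = {[]}" by auto
  then show ?case by (simp add: sum_nonneg)
next
  case (Suc l)
  let ?T = "sum c A" and ?Q = "\<Sum>a\<in>A. (c a)^2"
  let ?D = "{xs. length xs = l \<and> distinct xs \<and> set xs \<subseteq> A}"
  let ?L = "{xs. length xs = l \<and> set xs \<subseteq> A}"
  let ?P = "\<lambda>ys. \<Prod>j<l. c (ys!j)"
  define E where "E = (\<Sum>ys\<in>?D. ?P ys * (\<Sum>k<l. c (ys!k)))"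
  have finL: "finite ?L" using finite_lists_length_eq[OF fin, of l] by (simp add: conj_commute)
  have T0: "0 \<le> ?T" using nn by (simp add: sum_nonneg)
  have Q0: "0 \<le> ?Q" by (simp add: sum_nonneg)
  have M0: "0 \<le> M" using M1 by simp
  have stp: "(\<Sum>xs\<in>{xs. length xs = Suc l \<and> distinct xs \<and> set xs \<subseteq> A}. \<Prod>j<Suc l. c (xs!j)) = ?T * (\<Sum>ys\<in>?D. ?P ys) - E"
    unfolding dist_step[OF fin] E_def by (simp add: algebra_simps sum_subtractf sum_distrib_left)
  have "E \<le> (\<Sum>ys\<in>?L. ?P ys * (\<Sum>k<l. c (ys!k)))"
    unfolding E_def
  proof (rule sum_mono2[OF finL])
    show "?D \<subseteq> ?L" by auto
    fix ys assume "ys \<in> ?L - ?D"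
    then have "\<forall>j<l. c (ys!j) \<ge> 0" using nn by (auto simp: subset_iff)
    then show "0 \<le> ?P ys * (\<Sum>k<l. c (ys!k))"
      by (intro mult_nonneg_nonneg prod_nonneg sum_nonneg) auto
  qed
  also have "\<dots> = (\<Sum>k<l. \<Sum>ys\<in>?L. \<Prod>j<l. (if j = k then c (ys!j) * c (ys!j) else c (ys!j)))"
  proof -
    have key: "?P ys * c (ys!k) = (\<Prod>j<l. (if j = k then c (ys!j) * c (ys!j) else c (ys!j)))" if "k < l" for ys k
    proof -
      have "(\<Prod>j<l. (if j = k then c (ys!j) * c (ys!j) else c (ys!j)))
          = (\<Prod>j<l. c (ys!j) * (if j = k then c (ys!j) else 1))"
        by (rule prod.cong) auto
      also have "\<dots> = ?P ys * (\<Prod>j<l. (if j = k then c (ys!j) else 1))" by (simp add: prod.distrib)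
      also have "(\<Prod>j<l. (if j = k then c (ys!j) else 1)) = c (ys!k)" using that by (simp add: prod.delta')
      finally show ?thesis by simp
    qed
    have "(\<Sum>ys\<in>?L. ?P ys * (\<Sum>k<l. c (ys!k))) = (\<Sum>ys\<in>?L. \<Sum>k<l. \<Prod>j<l. (if j = k then c (ys!j) * c (ys!j) else c (ys!j)))"
    proof (rule sum.cong[OF refl])
      fix ys
      have "?P ys * (\<Sum>k<l. c (ys!k)) = (\<Sum>k<l. ?P ys * c (ys!k))" by (rule sum_distrib_left)
      also have "\<dots> = (\<Sum>k<l. \<Prod>j<l. (if j = k then c (ys!j) * c (ys!j) else c (ys!j)))"
        by (rule sum.cong[OF refl]) (rule key, simp)
      finally show "?P ys * (\<Sum>k<l. c (ys!k)) = (\<Sum>k<l. \<Prod>j<l. (if j = k then c (ys!j) * c (ys!j) else c (ys!j)))" .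
    qed
    also have "\<dots> = (\<Sum>k<l. \<Sum>ys\<in>?L. \<Prod>j<l. (if j = k then c (ys!j) * c (ys!j) else c (ys!j)))"
      by (rule sum.swap)
    finally show ?thesis .
  qed
  also have "\<dots> = (\<Sum>k<l. \<Prod>j<l. \<Sum>a\<in>A. (if j = k then c a * c a else c a))"
  proof (rule sum.cong[OF refl])
    fix k
    show "(\<Sum>ys\<in>?L. \<Prod>j<l. (if j = k then c (ys!j) * c (ys!j) else c (ys!j))) = (\<Prod>j<l. \<Sum>a\<in>A. (if j = k then c a * c a else c a))"
      using sum_lists_prod[OF fin, where l=l and f="\<lambda>j a. if j = k then c a * c a else c a"] by simp
  qed
  also have "\<dots> = (\<Sum>k<l. \<Prod>j<l. (if j = k then ?Q else ?T))"
    by (intro sum.cong prod.cong) (auto simp: power2_eq_square)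
  also have "\<dots> = (\<Sum>k<l. ?Q * ?T^(l-1))"
    by (rule sum.cong[OF refl]) (simp add: prod_if_one)
  also have "\<dots> \<le> (\<Sum>k<l. ?Q * M^l)"
  proof (rule sum_mono)
    fix k assume "k \<in> {..<l}"
    have "?T^(l-1) \<le> M^(l-1)" by (rule power_mono[OF TM T0])
    also have "\<dots> \<le> M^l" by (rule power_increasing[OF _ M1]) simp
    finally show "?Q * ?T^(l-1) \<le> ?Q * M^l" by (rule mult_left_mono[OF _ Q0])
  qed
  finally have Ele: "E \<le> real l * ?Q * M^l" by simp
  have IH: "?T^l - (\<Sum>ys\<in>?D. ?P ys) \<le> real (l choose 2) * ?Q * M^l" using Suc.IH .
  have X0: "0 \<le> real (l choose 2) * ?Q * M^l" using Q0 M0 by simp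
  have "?T^Suc l - (?T * (\<Sum>ys\<in>?D. ?P ys) - E) = ?T * (?T^l - (\<Sum>ys\<in>?D. ?P ys)) + E"
    by (simp add: algebra_simps)
  also have "\<dots> \<le> M * (real (l choose 2) * ?Q * M^l) + real l * ?Q * M^l"
  proof -
    have "?T * (?T^l - (\<Sum>ys\<in>?D. ?P ys)) \<le> ?T * (real (l choose 2) * ?Q * M^l)"
      by (rule mult_left_mono[OF IH T0])
    also have "\<dots> \<le> M * (real (l choose 2) * ?Q * M^l)"
      by (rule mult_right_mono[OF TM X0])
    finally show ?thesis using Ele by linarith
  qed
  also have "\<dots> \<le> M * (real (l choose 2) * ?Q * M^l) + M * (real l * ?Q * M^l)"
  proof -
    have "0 \<le> real l * ?Q * M^l" using Q0 M0 by simp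
    then have "real l * ?Q * M^l \<le> M * (real l * ?Q * M^l)" using M1
      by (simp add: mult_le_cancel_right1)
    then show ?thesis by linarith
  qed
  also have "\<dots> = real (Suc l choose 2) * ?Q * M^Suc l"
  proof -
    have "Suc l choose 2 = (l choose 2) + l"
      by (simp add: numeral_2_eq_2)
    then show ?thesis by (simp add: algebra_simps)
  qed
  finally show ?case unfolding stp .
qed

lemma ffact2_nonneg: "0 \<le> ffact2 (real n)"
  unfolding ffact2_def by (cases n) auto

lemma cN_nonneg: assumes "N \<ge> 2" shows "0 \<le> cN N nu r"
proof -
  have "0 < ffact2 (real N)" using assms unfolding ffact2_def by simp
  then show ?thesis unfolding cN_def by (intro divide_nonneg_pos sum_nonneg ffact2_nonneg) auto
qed

lemma cN_le1:
  assumes N2: "N \<ge> 2" and rs: "(\<Sum>i=1..N. nu r i) = N"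
  shows "cN N nu r \<le> 1"
proof -
  have pos: "0 < ffact2 (real N)" using N2 unfolding ffact2_def by simp
  have le: "ffact2 (real (nu r i)) \<le> real N * real (nu r i) - real (nu r i)" if "i \<in> {1..N}" for i
  proof -
    have "nu r i \<le> (\<Sum>i=1..N. nu r i)" by (rule member_le_sum) (use that in auto)
    then have "real (nu r i) \<le> real N" using rs by simp
    then have "real (nu r i) * real (nu r i) \<le> real N * real (nu r i)" by (rule mult_right_mono) simp
    then show ?thesis unfolding ffact2_def by (simp add: algebra_simps)
  qed
  have "(\<Sum>i=1..N. ffact2 (real (nu r i))) \<le> (\<Sum>i=1..N. real N * real (nu r i) - real (nu r i))"
    by (rule sum_mono) (rule le)
  also have "\<dots> = real N * real N - real N"
  proof -
    have "(\<Sum>i=1..N. real (nu r i)) = real N" using rs by (metis of_nat_sum)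
    then show ?thesis by (simp add: sum_subtractf sum_distrib_left[symmetric])
  qed
  also have "\<dots> = ffact2 (real N)" unfolding ffact2_def by (simp add: algebra_simps)
  finally show ?thesis unfolding cN_def using pos by simp
qed

lemma tau_props:
  fixes c :: "nat \<Rightarrow> real" and u :: real
  assumes u0: "0 < u" and ex: "\<exists>m. (\<Sum>r=1..m. c r) \<ge> u"
  defines "a \<equiv> Inf {m::nat. (\<Sum>r=1..m. c r) \<ge> u}"
  shows "1 \<le> a" "u \<le> (\<Sum>r=1..a. c r)" "(\<Sum>r=1..a. c r) < u + c a"
    "\<And>m. u \<le> (\<Sum>r=1..m. c r) \<Longrightarrow> a \<le> m"
proof -
  have aL: "a = (LEAST m. u \<le> (\<Sum>r=1..m. c r))" unfolding a_def Inf_nat_def by simp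
  show ua: "u \<le> (\<Sum>r=1..a. c r)" unfolding aL by (rule LeastI_ex[OF ex])
  show "\<And>m. u \<le> (\<Sum>r=1..m. c r) \<Longrightarrow> a \<le> m" unfolding aL by (rule Least_le)
  show a1: "1 \<le> a"
  proof (rule ccontr)
    assume "\<not> 1 \<le> a" then have "a = 0" by simp
    then show False using ua u0 by simp
  qed
  have "\<not> u \<le> (\<Sum>r=1..a-1. c r)" unfolding aL by (rule not_less_Least) (use a1 aL in simp)
  moreover have "(\<Sum>r=1..a. c r) = (\<Sum>r=1..a-1. c r) + c a"
    using a1 by (cases a) (auto simp: sum.cl_ivl_Suc)
  ultimately show "(\<Sum>r=1..a. c r) < u + c a" by linarith
qed

theorem lemma4:
  fixes N :: nat and nu :: "nat \<Rightarrow> nat \<Rightarrow> nat" and s t :: real and l :: nat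
  assumes N2: "N \<ge> 2"
    and rowsum: "\<And>r. r \<ge> 1 \<Longrightarrow> (\<Sum>i=1..N. nu r i) = N"
    and tau_fin: "\<And>u. u \<ge> 0 \<Longrightarrow> \<exists>m::nat. (\<Sum>r=1..m. cN N nu r) \<ge> u"
    and st: "0 < s" "s < t"
  shows "(distinct_tuple_sum (cN N nu) l (tauN N nu s + 1) (tauN N nu t) \<le> (t - s + 1) ^ l
         \<and> (t - s + 1) ^ l \<le> (t + 1) ^ l)
       \<and> ((if cN N nu (tauN N nu s) \<le> t - s then
            (t - s) ^ l - (cN N nu (tauN N nu s)
               + real (l choose 2) * (\<Sum>r = tauN N nu s + 1..tauN N nu t. (cN N nu r)\<^sup>2)) * (t + 1) ^ l
          else 0)
         \<le> distinct_tuple_sum (cN N nu) l (tauN N nu s + 1) (tauN N nu t)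
       \<and> distinct_tuple_sum (cN N nu) l (tauN N nu s + 1) (tauN N nu t)
         \<le> (t - s) ^ l + cN N nu (tauN N nu t) * (t + 1) ^ l)"
proof -
  define c where "c = cN N nu"
  define a where "a = tauN N nu s"
  define b where "b = tauN N nu t"
  define A where "A = {a+1..b}"
  define T where "T = sum c A"
  define Q where "Q = (\<Sum>r\<in>A. (c r)^2)"
  define D where "D = distinct_tuple_sum c l (a+1) b"
  define x where "x = t - s"
  define M where "M = t + 1"
  have cnn: "0 \<le> c r" for r unfolding c_def by (rule cN_nonneg[OF N2])
  have cle: "1 \<le> r \<Longrightarrow> c r \<le> 1" for r unfolding c_def by (rule cN_le1[OF N2 rowsum])
  have exs: "\<exists>m. (\<Sum>r=1..m. c r) \<ge> s" using tau_fin[of s] st unfolding c_def by simp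
  have ext: "\<exists>m. (\<Sum>r=1..m. c r) \<ge> t" using tau_fin[of t] st unfolding c_def by simp
  note ta = tau_props[of s c, OF st(1) exs, folded tauN_def[of N nu s, folded c_def], folded a_def]
  have t0: "0 < t" using st by simp
  note tb = tau_props[of t c, OF t0 ext, folded tauN_def[of N nu t, folded c_def], folded b_def]
  have ab: "a \<le> b" using ta(4) tb(2) st by force
  have "(\<Sum>r=1..b. c r) = (\<Sum>r=1..a. c r) + T"
    using sum.ub_add_nat[of 1 a c "b - a"] ab unfolding T_def A_def by simp
  have T0: "0 \<le> T" unfolding T_def by (simp add: sum_nonneg cnn)
  have ca1: "c a \<le> 1" using cle ta(1) .
  have cb1: "c b \<le> 1" using cle tb(1) .
  have Tup: "T \<le> x + c b" using ta tb \<open>(\<Sum>r=1..b. c r) = (\<Sum>r=1..a. c r) + T\<close> unfolding x_def by linarith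
  have Tlo: "x - c a \<le> T" using ta tb \<open>(\<Sum>r=1..b. c r) = (\<Sum>r=1..a. c r) + T\<close> unfolding x_def by linarith
  have x0: "0 \<le> x" using st unfolding x_def by simp
  have TM: "T \<le> M" using Tup cb1 unfolding x_def M_def using st by linarith
  have M1: "1 \<le> M" unfolding M_def using st by simp
  have finA: "finite A" unfolding A_def by simp
  have Ddef: "D = (\<Sum>xs\<in>{xs. length xs = l \<and> distinct xs \<and> set xs \<subseteq> A}. \<Prod>j<l. c (xs!j))"
    unfolding D_def distinct_tuple_sum_def A_def ..
  have D0: "0 \<le> D" unfolding Ddef by (intro sum_nonneg prod_nonneg cnn)
  have DT: "D \<le> T^l"
  proof -
    have finL: "finite {xs. length xs = l \<and> set xs \<subseteq> A}"
      using finite_lists_length_eq[OF finA, of l] by (simp add: conj_commute)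
    have "D \<le> (\<Sum>xs\<in>{xs. length xs = l \<and> set xs \<subseteq> A}. \<Prod>j<l. c (xs!j))"
      unfolding Ddef by (rule sum_mono2[OF finL]) (auto intro: prod_nonneg cnn)
    also have "\<dots> = T^l" using sum_lists_prod[OF finA, where l=l and f="\<lambda>j. c"] unfolding T_def by simp
    finally show ?thesis .
  qed
  have DB: "T^l - D \<le> real (l choose 2) * Q * M^l"
    unfolding Ddef T_def Q_def by (rule dist_bound[OF finA _ _ M1]) (use cnn TM T_def in auto)
  have p1: "D \<le> (t - s + 1)^l"
  proof -
    have "T^l \<le> (t - s + 1)^l" by (rule power_mono) (use Tup cb1 T0 x_def in auto)
    then show ?thesis using DT by linarith
  qed
  have p2: "(t - s + 1)^l \<le> (t + 1)^l" by (rule power_mono) (use st in auto)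
  have p4: "D \<le> x^l + c b * M^l"
  proof -
    have "T^l \<le> (x + c b)^l" by (rule power_mono[OF Tup T0])
    also have "\<dots> \<le> (1 - c b) * x^l + c b * (x+1)^l" by (rule pow_convex[OF x0 cnn cb1])
    also have "\<dots> \<le> x^l + c b * M^l"
    proof -
      have "(x+1)^l \<le> M^l" by (rule power_mono) (use x0 st in \<open>auto simp: x_def M_def\<close>)
      then have "c b * (x+1)^l \<le> c b * M^l" by (rule mult_left_mono[OF _ cnn])
      moreover have "0 \<le> c b * x^l" using cnn x0 by simp
      ultimately show ?thesis by (simp add: algebra_simps)
    qed
    finally show ?thesis using DT by linarith
  qed
  have p3: "(if c a \<le> x then x^l - (c a + real (l choose 2) * Q) * M^l else 0) \<le> D"
  proof (cases "c a \<le> x")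
    case True
    define y where "y = x - c a"
    have y0: "0 \<le> y" using True y_def by simp
    have "x^l = (y + c a)^l" unfolding y_def by simp
    also have "\<dots> \<le> (1 - c a) * y^l + c a * (y+1)^l" by (rule pow_convex[OF y0 cnn ca1])
    also have "\<dots> \<le> y^l + c a * M^l"
    proof -
      have "(y+1)^l \<le> M^l" by (rule power_mono) (use y0 st cnn[of a] in \<open>auto simp: y_def x_def M_def\<close>)
      then have "c a * (y+1)^l \<le> c a * M^l" by (rule mult_left_mono[OF _ cnn])
      moreover have "0 \<le> c a * y^l" using cnn y0 by simp
      ultimately show ?thesis by (simp add: algebra_simps)
    qed
    also have "y^l \<le> T^l" by (rule power_mono) (use y0 Tlo y_def in auto)
    finally have "x^l \<le> T^l + c a * M^l" by simp
    then show ?thesis using True DB by (simp add: algebra_simps)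
  qed (simp add: D0)
  show ?thesis
    using p1 p2 p3 p4
    unfolding D_def c_def a_def b_def x_def M_def Q_def A_def by simp
qed

end
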